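(* Let $c \in (0,1/2]$, $t_1 \in [0,1-2c]$, $t_2 \in [t_1+c,1-c]$, and let $p,q \in (0,1)$ with $p \neq q$. Let $F$, $\Lambda_{p,q}$ and $\gamma_r$ be as described in the context. Then for every $r\in\Lambda_{p,q}$, \[ \int_{F\times F}(x-y)\,d\gamma_r(x,y) = \frac{4(t_2-t_1)(q-r)(p-r)}{(p-q)\big(1-c+c(p+q-2r)\big)} - \left(\frac{p+q-2r}{p-q}\right)\int_{F\times F}|x-y|\,d\gamma_r(x,y). \]
   Context: Let $S_1(x)=cx+t_1$ and $S_2(x)=cx+t_2$ on $[0,1]$. Let $F\subseteq[0,1]$ be the unique nonempty compact set with $F=S_1(F)\cup S_2(F)$. For $p\in(0,1)$, $\mu_p$ is the unique Borel probability measure with $\mu_p = p\,\mu_p\circ S_1^{-1} + (1-p)\,\mu_p\circ S_2^{-1}$. On $[0,1]^2$ define $S_{i,j}(x,y)=(S_i(x),S_j(y))$ for $i,j\in\{1,2\}$. Let $\Lambda_{p,q}$ be the open interval $\max\{0,p+q-1\}<r<\min\{p,q\}$. For $r\in\Lambda_{p,q}$, $\gamma_r$ is the unique Borel probability measure on $[0,1]^2$ satisfying $\gamma_r = r\,\gamma_r\circ S_{1,1}^{-1} + (p-r)\,\gamma_r\circ S_{1,2}^{-1} + (q-r)\,\gamma_r\circ S_{2,1}^{-1} + (1-p-q+r)\,\gamma_r\circ S_{2,2}^{-1}$; it is supported on $F\times F$ and is a coupling of $\mu_p$ and $\mu_q$. *)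

theory Defs
  imports "HOL-Probability.Probability"
begin

definition sim :: "real \<Rightarrow> real \<Rightarrow> real \<Rightarrow> real" where
  "sim c t x = c * x + t"

definition attractor :: "real \<Rightarrow> real \<Rightarrow> real \<Rightarrow> real set" where
  "attractor c t1 t2 = (THE F. compact F \<and> F \<noteq> {} \<and>
      F = sim c t1 ` F \<union> sim c t2 ` F)"

definition Lambda_pq :: "real \<Rightarrow> real \<Rightarrow> real set" where
  "Lambda_pq p q = {r. max 0 (p + q - 1) < r \<and> r < min p q}"

definition sim2 :: "real \<Rightarrow> real \<Rightarrow> real \<Rightarrow> real \<times> real \<Rightarrow> real \<times> real" where
  "sim2 c ti tj z = (sim c ti (fst z), sim c tj (snd z))"

definition gamma_r :: "real \<Rightarrow> real \<Rightarrow> real \<Rightarrow> real \<Rightarrow> real \<Rightarrow> real \<Rightarrow> (real \<times> real) measure" where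
  "gamma_r c t1 t2 p q r = (THE M. prob_space M \<and> sets M = sets (borel :: (real \<times> real) measure) \<and>
     emeasure M ({0..1} \<times> {0..1}) = 1 \<and>
     (\<forall>A \<in> sets (borel :: (real \<times> real) measure).
        emeasure M A = ennreal r * emeasure M (sim2 c t1 t1 -` A)
                     + ennreal (p - r) * emeasure M (sim2 c t1 t2 -` A)
                     + ennreal (q - r) * emeasure M (sim2 c t2 t1 -` A)
                     + ennreal (1 - p - q + r) * emeasure M (sim2 c t2 t2 -` A)))"

end

theory Submission
  imports Defs
begin


lemma sum_UNIV_bb: "(\<Sum>b\<in>(UNIV::(bool\<times>bool) set). g b) = g (True,True) + g (True,False) + g (False,True) + g (False,False)"
proof -
  have U: "(UNIV::(bool\<times>bool) set) = {(True,True),(True,False),(False,True),(False,False)}"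
    by (auto; case_tac a; case_tac b; simp)
  show ?thesis by (simp only: U) (simp add: add.assoc)
qed

locale cpl =
  fixes c t1 t2 p q r :: real
  assumes c0: "0 < c" and c1: "c \<le> 1/2"
    and t10: "0 \<le> t1" and t11: "t1 \<le> 1 - 2*c" and t21: "t1 + c \<le> t2" and t22: "t2 \<le> 1 - c"
    and r0: "0 < r" and rp: "r < p" and rq: "r < q" and rpq: "p + q - 1 < r"
begin

definition tt :: "bool \<Rightarrow> real" where "tt b = (if b then t1 else t2)"
definition St :: "bool \<times> bool \<Rightarrow> real \<times> real \<Rightarrow> real \<times> real" where
  "St b z = (c * fst z + tt (fst b), c * snd z + tt (snd b))"
definition wt :: "bool \<times> bool \<Rightarrow> real" where
  "wt b = (if fst b then (if snd b then r else p - r) else (if snd b then q - r else 1 - p - q + r))"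

lemma wt_pos: "0 < wt b" using r0 rp rq rpq by (auto simp: wt_def)
lemma wt_sum: "(\<Sum>b\<in>UNIV. wt b) = 1" by (simp add: sum_UNIV_bb wt_def)

definition P :: "(bool \<times> bool) pmf" where "P = embed_pmf wt"

lemma pmf_P: "pmf P b = wt b"
  unfolding P_def
proof (rule pmf_embed_pmf)
  show "0 \<le> wt x" for x using wt_pos[of x] by simp
  show "(\<integral>\<^sup>+x. ennreal (wt x) \<partial>count_space UNIV) = 1"
  proof -
    have "(\<integral>\<^sup>+x. ennreal (wt x) \<partial>count_space UNIV) = (\<Sum>x\<in>UNIV. ennreal (wt x))"
      by (simp add: nn_integral_count_space_finite)
    also have "\<dots> = ennreal (\<Sum>x\<in>UNIV. wt x)"
      using wt_pos by (intro sum_ennreal) (simp add: less_imp_le)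
    finally show ?thesis by (simp add: wt_sum)
  qed
qed

lemma set_P: "set_pmf P = UNIV"
  using wt_pos by (auto simp: set_pmf_eq pmf_P) (metis less_irrefl)

lemma St_sim2: "St (b1, b2) = sim2 c (tt b1) (tt b2)"
  by (auto simp: St_def sim2_def sim_def fun_eq_iff)

lemma St_cont: "continuous_on UNIV (St b)"
  unfolding St_def by (intro continuous_intros)

lemma St_meas[measurable]: "St b \<in> borel_measurable borel"
  by (rule borel_measurable_continuous_onI[OF St_cont])

definition Mix :: "(real \<times> real) measure \<Rightarrow> (real \<times> real) measure" where
  "Mix M = distr (measure_pmf P \<Otimes>\<^sub>M M) borel (\<lambda>(b,z). St b z)"

lemma St_pair_meas:
  assumes "sets M = sets borel"
  shows "(\<lambda>(b,z). St b z) \<in> measurable (measure_pmf P \<Otimes>\<^sub>M M) borel"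
proof -
  have "(\<lambda>x. St (fst x) (snd x)) \<in> measurable (measure_pmf P \<Otimes>\<^sub>M M) borel"
  proof (rule measurable_compose_countable[where f="\<lambda>i x. St i (snd x)"])
    fix i
    have "St i \<in> measurable M borel"
      using St_meas measurable_cong_sets[OF assms refl, of borel] by blast
    then show "(\<lambda>x. St i (snd x)) \<in> borel_measurable (measure_pmf P \<Otimes>\<^sub>M M)"
      by (rule measurable_compose[OF measurable_snd])
    show "fst \<in> measure_pmf P \<Otimes>\<^sub>M M \<rightarrow>\<^sub>M count_space UNIV"
      using measurable_fst[of "measure_pmf P" M]
        measurable_cong_sets[OF refl sets_measure_pmf_count_space, of "measure_pmf P \<Otimes>\<^sub>M M" P] by blast
  qed
  then show ?thesis by (simp add: case_prod_beta')
qed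

lemma sets_Mix[simp, measurable_cong]: "sets (Mix M) = sets borel" by (simp add: Mix_def)

lemma space_M: "sets M = sets borel \<Longrightarrow> space M = UNIV"
  using sets_eq_imp_space_eq[of M borel] by simp

lemma mix_emeasure0:
  assumes M: "prob_space M" "sets M = sets borel" and A: "A \<in> sets borel"
  shows "emeasure (Mix M) A = (\<integral>\<^sup>+b. emeasure M (St b -` A) \<partial>measure_pmf P)"
proof -
  interpret prob_space M by fact
  have X: "(\<lambda>(b,z). St b z) -` A \<inter> space (measure_pmf P \<Otimes>\<^sub>M M) \<in> sets (measure_pmf P \<Otimes>\<^sub>M M)"
    using measurable_sets[OF St_pair_meas[OF M(2)] A] .
  have "emeasure (Mix M) A = emeasure (measure_pmf P \<Otimes>\<^sub>M M) ((\<lambda>(b,z). St b z) -` A \<inter> space (measure_pmf P \<Otimes>\<^sub>M M))"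
    unfolding Mix_def using St_pair_meas[OF M(2)] A by (rule emeasure_distr)
  also have "\<dots> = (\<integral>\<^sup>+b. emeasure M (Pair b -` ((\<lambda>(b,z). St b z) -` A \<inter> space (measure_pmf P \<Otimes>\<^sub>M M))) \<partial>measure_pmf P)"
    using X by (rule emeasure_pair_measure_alt)
  also have "\<dots> = (\<integral>\<^sup>+b. emeasure M (St b -` A) \<partial>measure_pmf P)"
    using space_M[OF M(2)] by (simp add: space_pair_measure vimage_def)
  finally show ?thesis .
qed

lemma mix_emeasure:
  assumes M: "prob_space M" "sets M = sets borel" and A: "A \<in> sets borel"
  shows "emeasure (Mix M) A = ennreal r * emeasure M (sim2 c t1 t1 -` A)
                     + ennreal (p - r) * emeasure M (sim2 c t1 t2 -` A)
                     + ennreal (q - r) * emeasure M (sim2 c t2 t1 -` A)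
                     + ennreal (1 - p - q + r) * emeasure M (sim2 c t2 t2 -` A)"
  unfolding mix_emeasure0[OF assms]
  by (subst nn_integral_measure_pmf_finite) (simp_all add: set_P sum_UNIV_bb pmf_P wt_def St_sim2 tt_def mult.commute)

definition props :: "(real \<times> real) measure \<Rightarrow> bool" where
  "props M \<longleftrightarrow> prob_space M \<and> sets M = sets (borel :: (real \<times> real) measure) \<and>
     emeasure M ({0..1} \<times> {0..1}) = 1 \<and>
     (\<forall>A \<in> sets (borel :: (real \<times> real) measure).
        emeasure M A = ennreal r * emeasure M (sim2 c t1 t1 -` A)
                     + ennreal (p - r) * emeasure M (sim2 c t1 t2 -` A)
                     + ennreal (q - r) * emeasure M (sim2 c t2 t1 -` A)
                     + ennreal (1 - p - q + r) * emeasure M (sim2 c t2 t2 -` A))"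

lemma gamma_eq: "gamma_r c t1 t2 p q r = (THE M. props M)"
  by (simp add: gamma_r_def props_def)

lemma props_Mix: "props M \<Longrightarrow> M = Mix M"
  unfolding props_def
  by (intro measure_eqI) (auto simp: mix_emeasure)

end

context cpl begin

abbreviation "Q \<equiv> ({0..1} \<times> {0..1} :: (real \<times> real) set)"

definition fixpt :: "(real \<times> real) measure \<Rightarrow> bool" where
  "fixpt M \<longleftrightarrow> prob_space M \<and> sets M = sets borel \<and> (AE z in M. z \<in> Q) \<and> M = Mix M"

lemma props_fixpt: assumes "props M" shows "fixpt M"
proof -
  have pr: "prob_space M" "sets M = sets borel" "emeasure M Q = 1" using assms by (auto simp: props_def)
  interpret prob_space M by fact
  have "prob Q = 1" using pr by (simp add: measure_def)
  then have "AE z in M. z \<in> Q" by (rule AE_prob_1)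
  then show ?thesis using pr props_Mix[OF assms] unfolding fixpt_def by blast
qed

lemma integrable_cont:
  fixes f :: "real \<times> real \<Rightarrow> real"
  assumes M: "prob_space M" "sets M = sets borel" "AE z in M. z \<in> Q" and f: "continuous_on UNIV f"
  shows "integrable M f"
proof -
  interpret prob_space M by fact
  have "compact (f ` Q)"
    by (intro compact_continuous_image continuous_on_subset[OF f] compact_Times compact_Icc) auto
  from compact_imp_bounded[OF this] obtain B where B: "\<forall>x\<in>f ` Q. norm x \<le> B"
    unfolding bounded_iff by blast
  show ?thesis
  proof (rule integrable_const_bound[where B=B])
    show "AE x in M. norm (f x) \<le> B" using M(3) by (rule eventually_mono) (use B in blast)
    show "f \<in> borel_measurable M"
      using borel_measurable_continuous_onI[OF f] measurable_cong_sets[OF M(2) refl, of borel] by blast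
  qed
qed

lemma fixpt_eq: "fixpt M \<Longrightarrow> Mix M = M" unfolding fixpt_def by (elim conjE) (rule sym)

lemma mix_integral:
  fixes f :: "real \<times> real \<Rightarrow> real"
  assumes fp: "fixpt M" and f: "continuous_on UNIV f"
  shows "integral\<^sup>L M f = (\<Sum>b\<in>UNIV. wt b * integral\<^sup>L M (\<lambda>z. f (St b z)))"
proof -
  have M: "prob_space M" "sets M = sets borel" "AE z in M. z \<in> Q" using fp unfolding fixpt_def by blast+
  interpret Mp: prob_space M by fact
  interpret pair_prob_space "measure_pmf P" M ..
  have fm: "f \<in> borel_measurable borel" using borel_measurable_continuous_onI[OF f] .
  have int: "integrable M f" using integrable_cont[OF M f] .
  have "integral\<^sup>L M f = integral\<^sup>L (Mix M) f" using fixpt_eq[OF fp] by metis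
  also have "\<dots> = (\<integral>x. f ((\<lambda>(b,z). St b z) x) \<partial>(measure_pmf P \<Otimes>\<^sub>M M))"
    unfolding Mix_def by (rule integral_distr[OF St_pair_meas[OF M(2)] fm])
  also have "\<dots> = (\<integral>b. (\<integral>z. f ((\<lambda>(b,z). St b z) (b,z)) \<partial>M) \<partial>measure_pmf P)"
  proof (rule integral_fst'[symmetric])
    have "integrable (Mix M) f" using int fixpt_eq[OF fp] by metis
    then show "integrable (measure_pmf P \<Otimes>\<^sub>M M) (\<lambda>x. f ((\<lambda>(b,z). St b z) x))"
      unfolding Mix_def by (subst (asm) integrable_distr_eq[OF St_pair_meas[OF M(2)] fm])
  qed
  also have "\<dots> = (\<Sum>b\<in>UNIV. pmf P b *\<^sub>R (\<integral>z. f (St b z) \<partial>M))"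
    by (subst integral_measure_pmf[where A=UNIV]) auto
  finally show ?thesis by (simp add: pmf_P)
qed

lemma mix_AE:
  assumes fp: "fixpt M" and Pr: "{z. Pr z} \<in> sets borel" and h: "\<And>b. AE z in M. Pr (St b z)"
  shows "AE z in M. Pr z"
proof -
  have M: "prob_space M" "sets M = sets borel" using fp unfolding fixpt_def by blast+
  interpret Mp: prob_space M by fact
  interpret pair_prob_space "measure_pmf P" M ..
  have sp: "space M = UNIV" using space_M[OF M(2)] .
  have "AE x in measure_pmf P \<Otimes>\<^sub>M M. Pr ((\<lambda>(b,z). St b z) x)"
  proof (rule AE_pair_measure)
    have "(\<lambda>(b,z). St b z) -` {z. Pr z} \<inter> space (measure_pmf P \<Otimes>\<^sub>M M) \<in> sets (measure_pmf P \<Otimes>\<^sub>M M)"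
      using measurable_sets[OF St_pair_meas[OF M(2)] Pr] .
    then show "{x \<in> space (measure_pmf P \<Otimes>\<^sub>M M). Pr ((\<lambda>(b,z). St b z) x)} \<in> sets (measure_pmf P \<Otimes>\<^sub>M M)"
      by (simp add: vimage_def Int_def conj_commute)
    show "AE x in measure_pmf P. AE y in M. Pr ((\<lambda>(b,z). St b z) (x, y))"
      using h by simp
  qed
  then have "AE z in Mix M. Pr z"
    unfolding Mix_def using Pr by (subst AE_distr_iff[OF St_pair_meas[OF M(2)]]) simp_all
  then show ?thesis using fixpt_eq[OF fp] by metis
qed

end

context cpl begin

definition lipQ :: "real \<Rightarrow> (real \<times> real \<Rightarrow> real) \<Rightarrow> bool" where
  "lipQ L f \<longleftrightarrow> (\<forall>u\<in>Q. \<forall>v\<in>Q. \<bar>f u - f v\<bar> \<le> L * dist u v)"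

lemma tt_bounds: "0 \<le> tt b" "tt b \<le> 1 - c"
  using t10 t11 t21 t22 c0 by (auto simp: tt_def)

lemma St_Q: "z \<in> Q \<Longrightarrow> St b z \<in> Q"
proof -
  assume z: "z \<in> Q"
  have h: "0 \<le> c * x + tt a \<and> c * x + tt a \<le> 1" if "0 \<le> x" "x \<le> 1" for x a
  proof -
    have "c * x \<le> c" using that c0 by (simp add: mult_left_le)
    moreover have "0 \<le> c * x" using that c0 by simp
    ultimately show ?thesis using tt_bounds[of a] by linarith
  qed
  show ?thesis using z h[of "fst z" "fst b"] h[of "snd z" "snd b"] by (auto simp: St_def)
qed

lemma dist_St: "dist (St b u) (St b v) = c * dist u v"
proof -
  obtain u1 u2 v1 v2 where uv: "u = (u1,u2)" "v = (v1,v2)" by (cases u, cases v) auto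
  have "dist (St b u) (St b v) = sqrt ((c * (u1 - v1))\<^sup>2 + (c * (u2 - v2))\<^sup>2)"
    by (simp add: uv St_def dist_Pair_Pair dist_real_def algebra_simps)
  also have "(c * (u1 - v1))\<^sup>2 + (c * (u2 - v2))\<^sup>2 = c\<^sup>2 * ((u1 - v1)\<^sup>2 + (u2 - v2)\<^sup>2)"
    by (simp add: power2_eq_square algebra_simps)
  also have "sqrt \<dots> = c * sqrt ((u1 - v1)\<^sup>2 + (u2 - v2)\<^sup>2)"
    using c0 by (simp add: real_sqrt_mult)
  also have "sqrt ((u1 - v1)\<^sup>2 + (u2 - v2)\<^sup>2) = dist u v"
    by (simp add: uv dist_Pair_Pair dist_real_def)
  finally show ?thesis .
qed

lemma lip_St: "lipQ L f \<Longrightarrow> 0 \<le> L \<Longrightarrow> lipQ (c * L) (\<lambda>z. f (St b z))"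
  unfolding lipQ_def
proof (intro ballI)
  fix u v assume h: "\<forall>u\<in>Q. \<forall>v\<in>Q. \<bar>f u - f v\<bar> \<le> L * dist u v" "0 \<le> L" "u \<in> Q" "v \<in> Q"
  have "\<bar>f (St b u) - f (St b v)\<bar> \<le> L * dist (St b u) (St b v)"
    using h St_Q by blast
  then show "\<bar>f (St b u) - f (St b v)\<bar> \<le> c * L * dist u v" by (simp add: dist_St mult_ac)
qed

lemma cont_St: "continuous_on UNIV f \<Longrightarrow> continuous_on UNIV (\<lambda>z. f (St b z))"
  by (rule continuous_on_compose2[OF _ St_cont]) auto

lemma dist_Q: "u \<in> Q \<Longrightarrow> v \<in> Q \<Longrightarrow> dist u v \<le> 2"
proof -
  assume uv: "u \<in> Q" "v \<in> Q"
  obtain u1 u2 v1 v2 where e: "u = (u1,u2)" "v = (v1,v2)" by (cases u, cases v) auto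
  have "dist u v \<le> \<bar>dist u1 v1\<bar> + \<bar>dist u2 v2\<bar>"
    unfolding e dist_Pair_Pair by (rule sqrt_sum_squares_le_sum_abs)
  also have "\<dots> \<le> 2" using uv e by (auto simp: dist_real_def)
  finally show ?thesis .
qed

lemma bound1:
  fixes f :: "real \<times> real \<Rightarrow> real"
  assumes fp: "fixpt M" and f: "continuous_on UNIV f" and L: "lipQ L f" and L0: "0 \<le> L"
  shows "\<bar>integral\<^sup>L M f - f (0,0)\<bar> \<le> 2 * L"
proof -
  have M: "prob_space M" "sets M = sets borel" "AE z in M. z \<in> Q" using fp unfolding fixpt_def by blast+
  interpret Mp: prob_space M by fact
  have int: "integrable M f" using integrable_cont[OF M f] .
  have ae: "AE z in M. \<bar>f z - f (0,0)\<bar> \<le> 2 * L"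
    using M(3)
  proof (rule eventually_mono)
    fix z assume z: "z \<in> Q"
    have "\<bar>f z - f (0,0)\<bar> \<le> L * dist z (0,0)" using L z unfolding lipQ_def by auto
    also have "\<dots> \<le> L * 2"
      using dist_Q[OF z, of "(0,0)"] L0 by (intro mult_left_mono) auto
    finally show "\<bar>f z - f (0,0)\<bar> \<le> 2 * L" by simp
  qed
  have "integral\<^sup>L M f \<le> integral\<^sup>L M (\<lambda>_. f (0,0) + 2 * L)"
    using ae by (intro integral_mono_AE int) (auto elim!: eventually_mono)
  moreover have "integral\<^sup>L M (\<lambda>_. f (0,0) - 2 * L) \<le> integral\<^sup>L M f"
    using ae by (intro integral_mono_AE int) (auto elim!: eventually_mono)
  ultimately show ?thesis using Mp.prob_space by (simp add: abs_le_iff)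
qed


lemma D_bound:
  fixes f :: "real \<times> real \<Rightarrow> real"
  assumes fM: "fixpt M" and fN: "fixpt N"
  shows "continuous_on UNIV f \<Longrightarrow> lipQ L f \<Longrightarrow> 0 \<le> L \<Longrightarrow>
    \<bar>integral\<^sup>L M f - integral\<^sup>L N f\<bar> \<le> 4 * L * c ^ n"
proof (induction n arbitrary: f L)
  case 0
  have "\<bar>integral\<^sup>L M f - f (0,0)\<bar> \<le> 2 * L" "\<bar>integral\<^sup>L N f - f (0,0)\<bar> \<le> 2 * L"
    using bound1[OF fM 0] bound1[OF fN 0] by auto
  then show ?case by simp
next
  case (Suc n)
  have cL: "0 \<le> c * L" using c0 Suc.prems by simp
  have IH: "\<bar>integral\<^sup>L M (\<lambda>z. f (St b z)) - integral\<^sup>L N (\<lambda>z. f (St b z))\<bar> \<le> 4 * (c * L) * c ^ n" for b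
    using Suc.IH[OF cont_St[OF Suc.prems(1)] lip_St[OF Suc.prems(2,3)] cL] .
  have "integral\<^sup>L M f - integral\<^sup>L N f =
      (\<Sum>b\<in>UNIV. wt b * (integral\<^sup>L M (\<lambda>z. f (St b z)) - integral\<^sup>L N (\<lambda>z. f (St b z))))"
    by (simp add: mix_integral[OF fM Suc.prems(1)] mix_integral[OF fN Suc.prems(1)]
        sum_subtractf[symmetric] right_diff_distrib)
  also have "\<bar>\<dots>\<bar> \<le> (\<Sum>b\<in>UNIV. wt b * (4 * (c * L) * c ^ n))"
  proof (rule order_trans[OF sum_abs], rule sum_mono)
    fix b :: "bool \<times> bool"
    show "\<bar>wt b * (integral\<^sup>L M (\<lambda>z. f (St b z)) - integral\<^sup>L N (\<lambda>z. f (St b z)))\<bar> \<le> wt b * (4 * (c * L) * c ^ n)"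
      using IH[of b] wt_pos[of b] by (simp add: abs_mult mult_left_mono)
  qed
  also have "\<dots> = 4 * L * c ^ Suc n"
    by (simp add: sum_distrib_right[symmetric] wt_sum)
  finally show ?case by simp
qed

lemma D_zero:
  fixes f :: "real \<times> real \<Rightarrow> real"
  assumes fM: "fixpt M" and fN: "fixpt N" and f: "continuous_on UNIV f" "lipQ L f" "0 \<le> L"
  shows "integral\<^sup>L M f = integral\<^sup>L N f"
proof -
  have "(\<lambda>n. 4 * L * c ^ n) \<longlonglongrightarrow> 4 * L * 0"
    using c0 c1 by (intro tendsto_mult_left LIMSEQ_power_zero) auto
  then have "\<bar>integral\<^sup>L M f - integral\<^sup>L N f\<bar> \<le> 4 * L * 0"
    by (rule LIMSEQ_le_const) (use D_bound[OF fM fN f] in auto)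
  then show ?thesis by simp
qed

lemma min1_lip: "\<bar>min 1 (x::real) - min 1 y\<bar> \<le> \<bar>x - y\<bar>"
  by (simp add: min_def abs_if)

lemma open_eq:
  assumes fM: "fixpt M" and fN: "fixpt N" and U: "open U"
  shows "emeasure M U = emeasure N U"
proof (cases "U = UNIV")
  case True
  have "prob_space M" "sets M = sets borel" "prob_space N" "sets N = sets borel"
    using fM fN unfolding fixpt_def by blast+
  then show ?thesis using True prob_space.emeasure_space_1 space_M by metis
next
  case False
  then have ne: "- U \<noteq> {}" by auto
  have cl: "closed (- U)" using U by auto
  define fn where "fn n z = min 1 (real n * infdist z (- U))" for n z
  have cont: "continuous_on UNIV (fn n)" for n
    unfolding fn_def by (intro continuous_intros)
  have lip: "lipQ (real n) (fn n)" for n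
    unfolding lipQ_def fn_def
  proof (intro ballI)
    fix u v :: "real \<times> real"
    have "\<bar>min 1 (real n * infdist u (- U)) - min 1 (real n * infdist v (- U))\<bar>
        \<le> \<bar>real n * infdist u (- U) - real n * infdist v (- U)\<bar>" by (rule min1_lip)
    also have "\<dots> = real n * \<bar>infdist u (- U) - infdist v (- U)\<bar>"
      by (simp add: right_diff_distrib[symmetric] abs_mult)
    also have "\<dots> \<le> real n * dist u v"
      by (intro mult_left_mono infdist_triangle_abs) auto
    finally show "\<bar>min 1 (real n * infdist u (- U)) - min 1 (real n * infdist v (- U))\<bar> \<le> real n * dist u v" .
  qed
  have eqn: "integral\<^sup>L M (fn n) = integral\<^sup>L N (fn n)" for n
    using D_zero[OF fM fN cont lip] by simp
  have lim: "(\<lambda>n. fn n z) \<longlonglongrightarrow> indicator U z" for z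
  proof (cases "z \<in> U")
    case True
    then have "z \<notin> closure (- U)" using cl by (simp add: closure_closed)
    then have d: "infdist z (- U) > 0" using in_closure_iff_infdist_zero[OF ne] infdist_nonneg[of z "-U"] by auto
    obtain N :: nat where N: "1 / infdist z (- U) < real N" using reals_Archimedean2 by blast
    have "eventually (\<lambda>n. fn n z = 1) sequentially"
      unfolding eventually_sequentially
    proof (intro exI allI impI)
      fix n assume "N \<le> n"
      then have "1 / infdist z (- U) < real n" using N by linarith
      then have "1 < real n * infdist z (- U)" using d by (simp add: field_simps)
      then show "fn n z = 1" by (simp add: fn_def)
    qed
    then show ?thesis using True by (simp add: tendsto_eventually)
  next
    case False
    then show ?thesis by (simp add: fn_def)
  qed
  have conv: "(\<lambda>n. integral\<^sup>L X (fn n)) \<longlonglongrightarrow> measure X U" if fX: "fixpt X" for X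
  proof -
    have X: "prob_space X" "sets X = sets borel" using fX unfolding fixpt_def by blast+
    interpret Xp: prob_space X by fact
    have Us: "U \<in> sets X" using X(2) U by simp
    have "(\<lambda>n. integral\<^sup>L X (fn n)) \<longlonglongrightarrow> integral\<^sup>L X (indicator U :: _ \<Rightarrow> real)"
    proof (rule integral_dominated_convergence[where w="\<lambda>_. 1"])
      show "(indicator U :: _ \<Rightarrow> real) \<in> borel_measurable X" using Us by simp
      show "fn n \<in> borel_measurable X" for n
        using borel_measurable_continuous_onI[OF cont[of n]] measurable_cong_sets[OF X(2) refl, of borel] by blast
      show "integrable X (\<lambda>_. 1::real)" by simp
      show "AE z in X. (\<lambda>n. fn n z) \<longlonglongrightarrow> indicator U z" using lim by simp
      show "AE z in X. norm (fn n z) \<le> 1" for n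
      proof (rule AE_I2)
        fix z
        have "0 \<le> real n * infdist z (- U)" by (simp add: infdist_nonneg)
        then show "norm (fn n z) \<le> 1" by (simp add: fn_def min_def)
      qed
    qed
    then show ?thesis using space_M[OF X(2)] by simp
  qed
  have pM: "prob_space M" "prob_space N" using fM fN unfolding fixpt_def by blast+
  interpret Mp: prob_space M by fact
  interpret Np: prob_space N by fact
  have "measure M U = measure N U"
    using LIMSEQ_unique[OF conv[OF fM]] conv[OF fN] eqn by simp
  then show ?thesis by (simp add: Mp.emeasure_eq_measure Np.emeasure_eq_measure)
qed

lemma uniq:
  assumes fM: "fixpt M" and fN: "fixpt N"
  shows "M = N"
proof -
  have X: "prob_space M" "sets M = sets borel" "prob_space N" "sets N = sets borel"
    using fM fN unfolding fixpt_def by blast+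
  show ?thesis
  proof (rule measure_eqI_generator_eq[where E="Collect open" and \<Omega>=UNIV and A="\<lambda>_. UNIV"])
    show "Int_stable (Collect open :: (real \<times> real) set set)" by (auto simp: Int_stable_def)
    show "Collect open \<subseteq> Pow (UNIV :: (real \<times> real) set)" by auto
    show "emeasure M U = emeasure N U" if "U \<in> Collect open" for U using open_eq[OF fM fN] that by simp
    show "sets M = sigma_sets UNIV (Collect open)" using X by (simp add: sets_borel)
    show "sets N = sigma_sets UNIV (Collect open)" using X by (simp add: sets_borel)
    show "range (\<lambda>_. UNIV) \<subseteq> (Collect open :: (real \<times> real) set set)" by auto
    show "(\<Union>i::nat. UNIV) = (UNIV :: (real \<times> real) set)" by simp
    show "emeasure M UNIV \<noteq> \<infinity>" for i :: nat using space_M[OF X(2)] prob_space.emeasure_space_1[OF X(1)] by simp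
  qed
qed

end

context cpl begin

definition ser :: "(nat \<Rightarrow> bool) \<Rightarrow> real" where
  "ser g = (\<Sum>n. c ^ n * tt (g n))"

lemma ser_summable: "summable (\<lambda>n. c ^ n * tt (g n))"
proof (rule summable_comparison_test'[where N=0])
  show "summable (\<lambda>n. c ^ n)" using c0 c1 by (intro summable_geometric) auto
  fix n :: nat
  have "tt (g n) \<le> 1" using tt_bounds[of "g n"] c0 by linarith
  then show "norm (c ^ n * tt (g n)) \<le> c ^ n"
    using tt_bounds[of "g n"] c0 by (simp add: abs_mult mult_left_le)
qed

lemma ser_shift: "ser g = tt (g 0) + c * ser (\<lambda>n. g (Suc n))"
proof -
  have "(\<Sum>n. c ^ Suc n * tt (g (Suc n))) = ser g - c ^ 0 * tt (g 0)"
    unfolding ser_def by (rule suminf_split_head[OF ser_summable])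
  moreover have "(\<Sum>n. c ^ Suc n * tt (g (Suc n))) = c * ser (\<lambda>n. g (Suc n))"
    unfolding ser_def by (simp add: suminf_mult[OF ser_summable, symmetric] mult.assoc)
  ultimately show ?thesis by simp
qed

lemma ser_bounds: "0 \<le> ser g" "ser g \<le> 1"
proof -
  show "0 \<le> ser g" unfolding ser_def
    using tt_bounds c0 by (intro suminf_nonneg ser_summable) simp
  have geo: "summable (\<lambda>n. c ^ n)" using c0 c1 by (intro summable_geometric) auto
  have "ser g \<le> (\<Sum>n. c ^ n * (1 - c))"
    unfolding ser_def
    using tt_bounds c0 by (intro suminf_le ser_summable summable_mult2 geo) (simp add: mult_left_mono)
  also have "\<dots> = (\<Sum>n. (1 - c) * c ^ n)"
    by (simp add: mult.commute)
  also have "\<dots> = (1 - c) * (\<Sum>n. c ^ n)"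
    by (rule suminf_mult[OF geo])
  also have "\<dots> = 1" using c0 c1 by (simp add: suminf_geometric)
  finally show "ser g \<le> 1" .
qed

abbreviation "SS \<equiv> stream_space (measure_pmf P)"

definition X :: "(bool \<times> bool) stream \<Rightarrow> real \<times> real" where
  "X w = (ser (\<lambda>n. fst (w !! n)), ser (\<lambda>n. snd (w !! n)))"

lemma X_Stream: "X (b ## s) = St b (X s)"
  using ser_shift[of "\<lambda>n. fst ((b ## s) !! n)"] ser_shift[of "\<lambda>n. snd ((b ## s) !! n)"]
  by (simp add: X_def St_def)

lemma X_Q: "X w \<in> Q" using ser_bounds by (simp add: X_def)

lemma ser_meas: "(\<lambda>w. ser (\<lambda>n. h (w !! n))) \<in> borel_measurable SS"
  unfolding ser_def
proof (rule borel_measurable_suminf)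
  fix i
  have "(\<lambda>x. c ^ i * tt (h x)) \<in> borel_measurable (measure_pmf P)" by simp
  then show "(\<lambda>w. c ^ i * tt (h (w !! i))) \<in> borel_measurable SS"
    by (rule measurable_compose[OF measurable_snth])
qed

lemma X_meas: "X \<in> measurable SS borel"
proof -
  have "(\<lambda>w. (ser (\<lambda>n. fst (w !! n)), ser (\<lambda>n. snd (w !! n)))) \<in> measurable SS (borel \<Otimes>\<^sub>M borel)"
    by (intro measurable_Pair ser_meas)
  then show ?thesis unfolding X_def[abs_def] borel_prod .
qed

definition G0 :: "(real \<times> real) measure" where "G0 = distr SS borel X"

lemma SS_prob: "prob_space SS"
  by (rule prob_space.prob_space_stream_space) (rule measure_pmf.prob_space_axioms)

lemma G0_ind: "B \<in> sets borel \<Longrightarrow> emeasure G0 B = (\<integral>\<^sup>+w. indicator B (X w) \<partial>SS)"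
proof -
  assume B: "B \<in> sets borel"
  have "emeasure G0 B = (\<integral>\<^sup>+z. indicator B z \<partial>G0)"
    using B by (simp add: G0_def)
  also have "\<dots> = (\<integral>\<^sup>+w. indicator B (X w) \<partial>SS)"
    unfolding G0_def using X_meas B by (intro nn_integral_distr) auto
  finally show ?thesis .
qed

lemma G0_props: "props G0"
proof -
  interpret S: prob_space SS by (rule SS_prob)
  have pr: "prob_space G0" unfolding G0_def by (rule S.prob_space_distr[OF X_meas])
  have se: "sets G0 = sets borel" by (simp add: G0_def)
  have "emeasure G0 Q = emeasure SS (X -` Q \<inter> space SS)"
    unfolding G0_def by (rule emeasure_distr[OF X_meas]) (intro borel_closed closed_Times; simp)
  also have "X -` Q \<inter> space SS = space SS" using X_Q by auto
  finally have q: "emeasure G0 Q = 1" by (simp add: S.emeasure_space_1)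
  have eq: "emeasure G0 A = emeasure (Mix G0) A" if A: "A \<in> sets borel" for A
  proof -
    have "emeasure G0 A = (\<integral>\<^sup>+w. indicator A (X w) \<partial>SS)" using G0_ind[OF A] .
    also have "\<dots> = (\<integral>\<^sup>+b. (\<integral>\<^sup>+s. indicator A (X (b ## s)) \<partial>SS) \<partial>measure_pmf P)"
      using A X_meas by (intro prob_space.nn_integral_stream_space[OF measure_pmf.prob_space_axioms]) simp
    also have "\<dots> = (\<integral>\<^sup>+b. (\<integral>\<^sup>+s. indicator (St b -` A) (X s) \<partial>SS) \<partial>measure_pmf P)"
      by (simp add: X_Stream indicator_def)
    also have "\<dots> = (\<integral>\<^sup>+b. emeasure G0 (St b -` A) \<partial>measure_pmf P)"
    proof (rule nn_integral_cong)
      fix b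
      have "St b -` A \<in> sets borel" using measurable_sets[OF St_meas A] by simp
      then show "(\<integral>\<^sup>+s. indicator (St b -` A) (X s) \<partial>SS) = emeasure G0 (St b -` A)"
        using G0_ind by simp
    qed
    also have "\<dots> = emeasure (Mix G0) A" using mix_emeasure0[OF pr se A] by simp
    finally show ?thesis .
  qed
  show ?thesis unfolding props_def using pr se q eq mix_emeasure[OF pr se] by simp
qed

end

context cpl begin

lemma sim_range: "x \<in> {0..1} \<Longrightarrow> sim c (tt b) x \<in> {0..1}"
proof -
  assume x: "x \<in> {0..1}"
  have "c * x \<le> c" using x c0 by (simp add: mult_left_le)
  moreover have "0 \<le> c * x" using x c0 by simp
  ultimately show ?thesis using tt_bounds[of b] by (simp add: sim_def)
qed

fun K :: "nat \<Rightarrow> real set" where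
  "K 0 = {0..1}"
| "K (Suc n) = sim c t1 ` K n \<union> sim c t2 ` K n"

lemma K_Suc_tt: "sim c (tt b) ` K n \<subseteq> K (Suc n)"
  by (cases b) (auto simp: tt_def)

lemma K_sub: "K (Suc n) \<subseteq> K n"
proof (induction n)
  case 0
  show ?case using sim_range[of _ True] sim_range[of _ False] by (auto simp: tt_def)
next
  case (Suc n)
  then show ?case by (simp only: K.simps) blast
qed

lemma K_mono: "m \<le> n \<Longrightarrow> K n \<subseteq> K m"
  by (rule lift_Suc_antimono_le[of K, OF K_sub])

lemma K_01: "K n \<subseteq> {0..1}" using K_mono[of 0 n] by simp

lemma sim_cont: "continuous_on UNIV (sim c t)"
  unfolding sim_def by (intro continuous_intros)

lemma K_compact: "compact (K n)"
  by (induction n) (auto intro!: compact_Un compact_continuous_image continuous_on_subset[OF sim_cont])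

definition F0 :: "real set" where "F0 = (\<Inter>n. K n)"

lemma x0_K: "t1 / (1 - c) \<in> K n"
proof (induction n)
  case 0
  show ?case using c0 c1 t10 t11 by (simp add: field_simps)
next
  case (Suc n)
  have "sim c t1 (t1 / (1 - c)) = t1 / (1 - c)" using c0 c1 by (simp add: sim_def field_simps)
  then show ?case using Suc by (simp only: K.simps) (metis UnI1 image_eqI)
qed

lemma F0_compact: "compact F0"
proof -
  have "closed F0" unfolding F0_def using K_compact by (intro closed_INT) (simp add: compact_imp_closed)
  moreover have "bounded F0" unfolding F0_def
    by (rule bounded_subset[OF compact_imp_bounded[OF K_compact[of 0]]]) blast
  ultimately show ?thesis by (simp add: compact_eq_bounded_closed)
qed

lemma F0_ne: "F0 \<noteq> {}" using x0_K unfolding F0_def by blast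

lemma sim_inv: "sim c t x = y \<longleftrightarrow> x = (y - t) / c"
  using c0 by (auto simp: sim_def field_simps)

lemma F0_inv: "F0 = sim c t1 ` F0 \<union> sim c t2 ` F0"
proof
  show "sim c t1 ` F0 \<union> sim c t2 ` F0 \<subseteq> F0"
  proof
    fix y assume "y \<in> sim c t1 ` F0 \<union> sim c t2 ` F0"
    then have "y \<in> sim c t1 ` K n \<union> sim c t2 ` K n" for n unfolding F0_def by blast
    then have yS: "y \<in> K (Suc n)" for n by simp
    have "y \<in> K n" for n
    proof (cases n)
      case 0
      then show ?thesis using yS[of 0] K_sub[of 0] by blast
    next
      case (Suc m)
      then show ?thesis using yS[of m] by blast
    qed
    then show "y \<in> F0" unfolding F0_def by blast
  qed
next
  show "F0 \<subseteq> sim c t1 ` F0 \<union> sim c t2 ` F0"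
  proof
    fix y assume y: "y \<in> F0"
    have "\<exists>t\<in>{t1,t2}. \<forall>n. y \<in> sim c t ` K n"
    proof (rule ccontr)
      assume "\<not> ?thesis"
      then obtain n1 n2 where n: "y \<notin> sim c t1 ` K n1" "y \<notin> sim c t2 ` K n2" by auto
      let ?m = "max n1 n2"
      have "y \<notin> sim c t1 ` K ?m" using n(1) K_mono[of n1 ?m] by auto
      moreover have "y \<notin> sim c t2 ` K ?m" using n(2) K_mono[of n2 ?m] by auto
      moreover have "y \<in> K (Suc ?m)" using y unfolding F0_def by blast
      ultimately show False by simp
    qed
    then obtain t where t: "t \<in> {t1,t2}" "\<And>n. y \<in> sim c t ` K n" by blast
    have "(y - t) / c \<in> K n" for n
    proof -
      obtain x where "x \<in> K n" "y = sim c t x" using t(2)[of n] by blast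
      then show ?thesis by (metis sim_inv)
    qed
    then have "(y - t) / c \<in> F0" unfolding F0_def by blast
    moreover have "y = sim c t ((y - t) / c)" using sim_inv by metis
    ultimately show "y \<in> sim c t1 ` F0 \<union> sim c t2 ` F0" using t(1) by auto
  qed
qed

lemma inv_sub:
  assumes A: "compact A" "A = sim c t1 ` A \<union> sim c t2 ` A"
    and B: "compact B" "B \<noteq> {}" "B = sim c t1 ` B \<union> sim c t2 ` B"
  shows "A \<subseteq> B"
proof
  obtain R1 where R1: "\<forall>a\<in>A. norm a \<le> R1" using compact_imp_bounded[OF A(1)] bounded_iff by blast
  obtain R2 where R2: "\<forall>a\<in>B. norm a \<le> R2" using compact_imp_bounded[OF B(1)] bounded_iff by blast
  define R where "R = R1 + R2"
  have Rb: "\<bar>a - b\<bar> \<le> R" if "a \<in> A" "b \<in> B" for a b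
    using R1 R2 that unfolding R_def by force
  have step: "\<forall>x\<in>A. \<exists>u\<in>B. \<bar>x - u\<bar> \<le> c ^ n * R" for n
  proof (induction n)
    case 0
    then show ?case using B(2) Rb by auto
  next
    case (Suc n)
    show ?case
    proof
      fix x assume "x \<in> A"
      then obtain t y where ty: "t \<in> {t1,t2}" "y \<in> A" "x = sim c t y" using A(2) \<open>x \<in> A\<close> by blast
      obtain u where u: "u \<in> B" "\<bar>y - u\<bar> \<le> c ^ n * R" using Suc ty(2) by blast
      have "sim c t u \<in> B" using u(1) ty(1) B(3) by blast
      moreover have e1: "\<bar>x - sim c t u\<bar> = c * \<bar>y - u\<bar>"
        using ty(3) c0 by (simp add: sim_def right_diff_distrib[symmetric] abs_mult)
      moreover have e2: "c * \<bar>y - u\<bar> \<le> c ^ Suc n * R" using u(2) c0 by (simp add: mult_left_mono)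
      ultimately show "\<exists>u\<in>B. \<bar>x - u\<bar> \<le> c ^ Suc n * R"
        by (metis order_trans order_refl)
    qed
  qed
  fix x assume x: "x \<in> A"
  have "x \<in> closure B"
    unfolding closure_approachable
  proof (intro allI impI)
    fix e :: real assume e: "0 < e"
    have "(\<lambda>n. c ^ n * R) \<longlonglongrightarrow> 0 * R"
      using c0 c1 by (intro tendsto_mult_right LIMSEQ_power_zero) auto
    then have "eventually (\<lambda>n. c ^ n * R < e) sequentially"
      using e by (simp add: order_tendstoD(2))
    then obtain n where n: "c ^ n * R < e" by (auto simp: eventually_sequentially)
    obtain u where "u \<in> B" "\<bar>x - u\<bar> \<le> c ^ n * R" using step x by blast
    then have "dist u x < e" using n by (simp add: dist_real_def abs_minus_commute)
    then show "\<exists>y\<in>B. dist y x < e" using \<open>u \<in> B\<close> by blast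
  qed
  then show "x \<in> B" using B(1) by (simp add: compact_imp_closed closure_closed)
qed

lemma attractor_eq: "attractor c t1 t2 = F0"
  unfolding attractor_def
proof (rule the_equality)
  show "compact F0 \<and> F0 \<noteq> {} \<and> F0 = sim c t1 ` F0 \<union> sim c t2 ` F0"
    using F0_compact F0_ne F0_inv by blast
  fix A assume "compact A \<and> A \<noteq> {} \<and> A = sim c t1 ` A \<union> sim c t2 ` A"
  then show "A = F0"
    using inv_sub[of A F0] inv_sub[of F0 A] F0_compact F0_ne F0_inv by blast
qed

lemma AE_F0:
  assumes fp: "fixpt M"
  shows "AE z in M. z \<in> F0 \<times> F0"
proof -
  have "AE z in M. z \<in> K n \<times> K n" for n
  proof (induction n)
    case 0
    then show ?case using fp unfolding fixpt_def by simp
  next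
    case (Suc n)
    show ?case
    proof (rule mix_AE[OF fp])
      have "closed (K (Suc n) \<times> K (Suc n))"
        using K_compact[of "Suc n"] by (intro closed_Times compact_imp_closed)
      then show "{z. z \<in> K (Suc n) \<times> K (Suc n)} \<in> sets borel"
        by (metis borel_closed Collect_mem_eq)
      fix b
      show "AE z in M. St b z \<in> K (Suc n) \<times> K (Suc n)"
        using Suc
      proof (rule eventually_mono)
        fix z assume "z \<in> K n \<times> K n"
        then have "sim c (tt (fst b)) (fst z) \<in> K (Suc n)" "sim c (tt (snd b)) (snd z) \<in> K (Suc n)"
          using K_Suc_tt[of "fst b" n] K_Suc_tt[of "snd b" n] by (auto simp del: K.simps simp: mem_Times_iff)
        then show "St b z \<in> K (Suc n) \<times> K (Suc n)" by (simp add: St_def sim_def)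
      qed
    qed
  qed
  then have "AE z in M. \<forall>n. z \<in> K n \<times> K n" by (simp add: AE_all_countable)
  then show ?thesis by (rule eventually_mono) (auto simp: F0_def)
qed

end

context cpl begin

lemma gamma_props: "props (gamma_r c t1 t2 p q r)"
proof -
  have "\<exists>!M. props M"
    using G0_props uniq[OF props_fixpt props_fixpt] by blast
  then show ?thesis unfolding gamma_eq by (rule theI')
qed

lemma lin_int:
  fixes g :: "real \<times> real \<Rightarrow> real"
  assumes fp: "fixpt M" and g: "continuous_on UNIV g"
  shows "integral\<^sup>L M (\<lambda>z. a * g z + k) = a * integral\<^sup>L M g + k"
proof -
  have M: "prob_space M" "sets M = sets borel" "AE z in M. z \<in> Q" using fp unfolding fixpt_def by blast+
  interpret prob_space M by fact
  have "integrable M g" using integrable_cont[OF M g] .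
  then show ?thesis by (simp add: prob_space)
qed

lemma cont_fst: "continuous_on UNIV (fst :: real \<times> real \<Rightarrow> real)" by (intro continuous_intros)
lemma cont_snd: "continuous_on UNIV (snd :: real \<times> real \<Rightarrow> real)" by (intro continuous_intros)
lemma cont_d: "continuous_on UNIV (\<lambda>z::real \<times> real. fst z - snd z)" by (intro continuous_intros)
lemma cont_a: "continuous_on UNIV (\<lambda>z::real \<times> real. \<bar>fst z - snd z\<bar>)" by (intro continuous_intros)

lemma main_calc:
  assumes fp: "fixpt M"
  defines "E1 \<equiv> integral\<^sup>L M fst" and "E2 \<equiv> integral\<^sup>L M snd"
    and "D \<equiv> integral\<^sup>L M (\<lambda>z. fst z - snd z)" and "A \<equiv> integral\<^sup>L M (\<lambda>z. \<bar>fst z - snd z\<bar>)"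
  shows "(1 - c) * E1 = p * t1 + (1 - p) * t2"
    and "(1 - c) * E2 = q * t1 + (1 - q) * t2"
    and "D = E1 - E2"
    and "A = r * (c * A) + (p - r) * ((t2 - t1) - c * D) + (q - r) * (c * D + (t2 - t1)) + (1 - p - q + r) * (c * A)"
proof -
  have M: "prob_space M" "sets M = sets borel" "AE z in M. z \<in> Q" using fp unfolding fixpt_def by blast+
  have l1: "integral\<^sup>L M (\<lambda>z. c * fst z + k) = c * E1 + k" for k
    unfolding E1_def by (rule lin_int[OF fp cont_fst])
  have l2: "integral\<^sup>L M (\<lambda>z. c * snd z + k) = c * E2 + k" for k
    unfolding E2_def by (rule lin_int[OF fp cont_snd])
  have "E1 = (\<Sum>b\<in>UNIV. wt b * integral\<^sup>L M (\<lambda>z. fst (St b z)))"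
    unfolding E1_def by (rule mix_integral[OF fp cont_fst])
  also have "\<dots> = (\<Sum>b\<in>UNIV. wt b * (c * E1 + tt (fst b)))"
    by (simp add: St_def l1)
  finally show "(1 - c) * E1 = p * t1 + (1 - p) * t2"
    by (simp add: sum_UNIV_bb wt_def tt_def algebra_simps)
  have "E2 = (\<Sum>b\<in>UNIV. wt b * integral\<^sup>L M (\<lambda>z. snd (St b z)))"
    unfolding E2_def by (rule mix_integral[OF fp cont_snd])
  also have "\<dots> = (\<Sum>b\<in>UNIV. wt b * (c * E2 + tt (snd b)))"
    by (simp add: St_def l2)
  finally show "(1 - c) * E2 = q * t1 + (1 - q) * t2"
    by (simp add: sum_UNIV_bb wt_def tt_def algebra_simps)
  have i1: "integrable M fst" "integrable M snd" using integrable_cont[OF M] cont_fst cont_snd by auto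
  show "D = E1 - E2" unfolding D_def E1_def E2_def using i1 by simp
  have ld: "integral\<^sup>L M (\<lambda>z. a * (fst z - snd z) + k) = a * D + k" for a k
    unfolding D_def by (rule lin_int[OF fp cont_d])
  have meas: "h \<in> borel_measurable M" if "continuous_on UNIV h" for h :: "real \<times> real \<Rightarrow> real"
    using borel_measurable_continuous_onI[OF that] measurable_cong_sets[OF M(2) refl, of borel] by blast
  have aTT: "integral\<^sup>L M (\<lambda>z. \<bar>fst (St (b,b) z) - snd (St (b,b) z)\<bar>) = c * A" for b
  proof -
    have "(\<lambda>z. \<bar>fst (St (b,b) z) - snd (St (b,b) z)\<bar>) = (\<lambda>z. c * \<bar>fst z - snd z\<bar>)"
      using c0 by (auto simp: St_def right_diff_distrib[symmetric] abs_mult)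
    then show ?thesis unfolding A_def by simp
  qed
  have aTF: "integral\<^sup>L M (\<lambda>z. \<bar>fst (St (True,False) z) - snd (St (True,False) z)\<bar>) = (t2 - t1) - c * D"
  proof -
    have "integral\<^sup>L M (\<lambda>z. \<bar>fst (St (True,False) z) - snd (St (True,False) z)\<bar>)
        = integral\<^sup>L M (\<lambda>z. (- c) * (fst z - snd z) + (t2 - t1))"
    proof (rule integral_cong_AE)
      show "(\<lambda>z. \<bar>fst (St (True,False) z) - snd (St (True,False) z)\<bar>) \<in> borel_measurable M"
        by (rule meas) (unfold St_def, intro continuous_intros)
      show "(\<lambda>z. (- c) * (fst z - snd z) + (t2 - t1)) \<in> borel_measurable M"
        by (rule meas) (intro continuous_intros)
      show "AE z in M. \<bar>fst (St (True,False) z) - snd (St (True,False) z)\<bar> = (- c) * (fst z - snd z) + (t2 - t1)"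
        using M(3)
      proof (rule eventually_mono)
        fix z :: "real \<times> real" assume z: "z \<in> Q"
        have "c * (fst z - snd z) \<le> c" using z c0 by (auto intro!: mult_left_le)
        then show "\<bar>fst (St (True,False) z) - snd (St (True,False) z)\<bar> = (- c) * (fst z - snd z) + (t2 - t1)"
          using t21 by (simp add: St_def tt_def abs_if algebra_simps)
      qed
    qed
    then show ?thesis using ld[of "-c" "t2 - t1"] by simp
  qed
  have aFT: "integral\<^sup>L M (\<lambda>z. \<bar>fst (St (False,True) z) - snd (St (False,True) z)\<bar>) = c * D + (t2 - t1)"
  proof -
    have "integral\<^sup>L M (\<lambda>z. \<bar>fst (St (False,True) z) - snd (St (False,True) z)\<bar>)
        = integral\<^sup>L M (\<lambda>z. c * (fst z - snd z) + (t2 - t1))"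
    proof (rule integral_cong_AE)
      show "(\<lambda>z. \<bar>fst (St (False,True) z) - snd (St (False,True) z)\<bar>) \<in> borel_measurable M"
        by (rule meas) (unfold St_def, intro continuous_intros)
      show "(\<lambda>z. c * (fst z - snd z) + (t2 - t1)) \<in> borel_measurable M"
        by (rule meas) (intro continuous_intros)
      show "AE z in M. \<bar>fst (St (False,True) z) - snd (St (False,True) z)\<bar> = c * (fst z - snd z) + (t2 - t1)"
        using M(3)
      proof (rule eventually_mono)
        fix z :: "real \<times> real" assume z: "z \<in> Q"
        have "c * (snd z - fst z) \<le> c" using z c0 by (auto intro!: mult_left_le)
        then show "\<bar>fst (St (False,True) z) - snd (St (False,True) z)\<bar> = c * (fst z - snd z) + (t2 - t1)"
          using t21 by (simp add: St_def tt_def abs_if algebra_simps)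
      qed
    qed
    then show ?thesis using ld[of c "t2 - t1"] by simp
  qed
  have "A = (\<Sum>b\<in>UNIV. wt b * integral\<^sup>L M (\<lambda>z. \<bar>fst (St b z) - snd (St b z)\<bar>))"
    unfolding A_def by (rule mix_integral[OF fp cont_a])
  then show "A = r * (c * A) + (p - r) * ((t2 - t1) - c * D) + (q - r) * (c * D + (t2 - t1)) + (1 - p - q + r) * (c * A)"
    by (simp add: sum_UNIV_bb wt_def aTT aTF aFT)
qed

end

lemma final_alg:
  fixes c t1 t2 p q r E1 E2 D A s K T :: real
  assumes h1: "(1 - c) * E1 = p * t1 + (1 - p) * t2" and h2: "(1 - c) * E2 = q * t1 + (1 - q) * t2"
    and h3: "D = E1 - E2"
    and h4: "A = r * (c * A) + (p - r) * ((t2 - t1) - c * D) + (q - r) * (c * D + (t2 - t1)) + (1 - p - q + r) * (c * A)"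
    and s_def: "s = p + q - 2*r" and K_def: "K = 1 - c + c * s" and T_def: "T = t2 - t1"
    and s0: "0 < s" and c0: "0 < c" "c \<le> 1/2" and pq: "p - q \<noteq> 0"
  shows "D = 4 * T * (q - r) * (p - r) / ((p - q) * K) - (s / (p - q)) * A"
proof -
  have cs: "0 < c * s" using c0 s0 by simp
  have K0: "K \<noteq> 0" using cs c0 unfolding K_def by linarith
  have hD: "(1 - c) * D = (p - q) * (t1 - t2)"
  proof -
    have "(1 - c) * D = (1 - c) * E1 - (1 - c) * E2" by (simp add: h3 algebra_simps)
    also have "\<dots> = (p - q) * (t1 - t2)" unfolding h1 h2 by (simp add: algebra_simps)
    finally show ?thesis .
  qed
  have kA: "K * A = s * T + c * (q - p) * D"
  proof -
    have "K * A = A - (r * (c * A) + (1 - p - q + r) * (c * A))" unfolding K_def s_def by (simp add: algebra_simps)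
    also have "\<dots> = (p - r) * ((t2 - t1) - c * D) + (q - r) * (c * D + (t2 - t1))"
      using h4 by linarith
    also have "\<dots> = s * T + c * (q - p) * D" unfolding s_def T_def by (simp add: algebra_simps)
    finally show ?thesis .
  qed
  have e1: "(p - q) * K * D + s * (s * T + c * (q - p) * D) = (p - q) * ((1 - c) * D) + s * s * T"
    unfolding K_def by (simp add: algebra_simps)
  have e2: "(p - q) * ((1 - c) * D) = (p - q) * ((p - q) * (t1 - t2))" by (simp add: hD)
  have e3: "(p - q) * ((p - q) * (t1 - t2)) + s * s * T = 4 * T * (q - r) * (p - r)"
    unfolding s_def T_def by (simp add: algebra_simps)
  have main: "(p - q) * K * D = 4 * T * (q - r) * (p - r) - s * (K * A)"
    using e1 e2 e3 unfolding kA by linarith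
  have "4 * T * (q - r) * (p - r) / ((p - q) * K) - (s / (p - q)) * A
        = (4 * T * (q - r) * (p - r) - s * (K * A)) / ((p - q) * K)"
  proof -
    have "(s * (K * A)) / ((p - q) * K) = (s / (p - q)) * A" using K0 pq by (simp add: field_simps)
    then show ?thesis by (simp add: diff_divide_distrib)
  qed
  also have "\<dots> = ((p - q) * K * D) / ((p - q) * K)" by (simp add: main)
  also have "\<dots> = D" using K0 pq by simp
  finally show ?thesis by simp
qed

theorem lemma3p1:
  fixes c t1 t2 p q r :: real
  assumes "0 < c" "c \<le> 1/2"
    and "0 \<le> t1" "t1 \<le> 1 - 2*c"
    and "t1 + c \<le> t2" "t2 \<le> 1 - c"
    and "0 < p" "p < 1" "0 < q" "q < 1" "p \<noteq> q"
    and "r \<in> Lambda_pq p q"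
  shows "(\<integral>z \<in> attractor c t1 t2 \<times> attractor c t1 t2. (fst z - snd z) \<partial>(gamma_r c t1 t2 p q r))
       = 4 * (t2 - t1) * (q - r) * (p - r) / ((p - q) * (1 - c + c * (p + q - 2*r)))
         - ((p + q - 2*r) / (p - q)) *
           (\<integral>z \<in> attractor c t1 t2 \<times> attractor c t1 t2. \<bar>fst z - snd z\<bar> \<partial>(gamma_r c t1 t2 p q r))"
proof -
  from assms(12) have r: "max 0 (p+q-1) < r" "r < min p q" by (simp_all add: Lambda_pq_def)
  interpret cpl c t1 t2 p q r by unfold_locales (use assms r in auto)
  define G where "G = gamma_r c t1 t2 p q r"
  have fp: "fixpt G" unfolding G_def by (rule props_fixpt[OF gamma_props])
  have M: "prob_space G" "sets G = sets borel" using fp unfolding fixpt_def by blast+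
  have AE: "AE z in G. z \<in> F0 \<times> F0" by (rule AE_F0[OF fp])
  have FF: "F0 \<times> F0 \<in> sets G"
    using M(2) F0_compact by (simp add: borel_closed closed_Times compact_imp_closed)
  have si: "(\<integral>z \<in> F0 \<times> F0. f z \<partial>G) = integral\<^sup>L G f" if f: "continuous_on UNIV f" for f :: "real \<times> real \<Rightarrow> real"
    unfolding set_lebesgue_integral_def
  proof (rule integral_cong_AE)
    have fm: "f \<in> borel_measurable G"
      using borel_measurable_continuous_onI[OF f] measurable_cong_sets[OF M(2) refl, of borel] by blast
    then show "f \<in> borel_measurable G" .
    show "(\<lambda>z. indicator (F0 \<times> F0) z *\<^sub>R f z) \<in> borel_measurable G"
      using FF fm by (intro borel_measurable_scaleR borel_measurable_indicator)
    show "AE z in G. indicator (F0 \<times> F0) z *\<^sub>R f z = f z"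
      using AE by (rule eventually_mono) simp
  qed
  define E1 where "E1 = integral\<^sup>L G fst"
  define E2 where "E2 = integral\<^sup>L G snd"
  define D where "D = integral\<^sup>L G (\<lambda>z. fst z - snd z)"
  define A where "A = integral\<^sup>L G (\<lambda>z. \<bar>fst z - snd z\<bar>)"
  have h1: "(1 - c) * E1 = p * t1 + (1 - p) * t2" and h2: "(1 - c) * E2 = q * t1 + (1 - q) * t2"
    and h3: "D = E1 - E2"
    and h4: "A = r * (c * A) + (p - r) * ((t2 - t1) - c * D) + (q - r) * (c * D + (t2 - t1)) + (1 - p - q + r) * (c * A)"
    using main_calc[OF fp] unfolding E1_def E2_def D_def A_def by blast+
  define s where "s = p + q - 2*r"
  define K where "K = 1 - c + c * s"
  define T where "T = t2 - t1"
  have s0: "0 < s" using r unfolding s_def by auto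
  have fin: "D = 4 * T * (q - r) * (p - r) / ((p - q) * K) - (s / (p - q)) * A"
    by (rule final_alg[OF h1 h2 h3 h4 s_def K_def T_def s0 assms(1,2)]) (use assms(11) in simp)
  show ?thesis
    unfolding attractor_eq G_def[symmetric]
    using fin si[OF cont_d] si[OF cont_a]
    unfolding D_def A_def K_def s_def T_def by simp
qed

end
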